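(* Let $F:\mathbb{R}^p\to\mathbb{R}^p$ be single-valued and $T:\mathbb{R}^p\rightrightarrows\mathbb{R}^p$, $\Phi:=F+T$, with $\mathrm{zer}\,\Phi\neq\emptyset$. Assume $T$ is maximally monotone, $F$ is $L$-Lipschitz continuous, and $\langle Fx-Fx^\star,x-x^\star\rangle\ge0$ for all $x\in\mathrm{dom}\,F$ for some $x^\star\in\mathrm{zer}\,\Phi$. Let $\eta>0$ and let $\{(x^k,y^k)\}$ be generated by the reflected forward-backward splitting scheme: start from $x^0\in\mathrm{dom}\,\Phi$, set $x^{-1}:=x^0$, and for $k\ge0$ $$y^k:=2x^k-x^{k-1},\qquad x^{k+1}:=J_{\eta T}(x^k-\eta Fy^k).$$ Define $$\mathcal{V}_k:=\|x^k-x^\star\|^2+2\|x^k-x^{k-1}\|^2+(1-\sqrt2L\eta)\|x^k-y^{k-1}\|^2+2\eta\langle Fy^{k-1}-Fx^\star,x^k-x^{k-1}\rangle.$$ Then for every $k\ge1$, $$\mathcal{V}_k\ge\mathcal{V}_{k+1}+\big[1-(1+\sqrt2)L\eta\big]\big[\|y^k-x^k\|^2+\|x^k-y^{k-1}\|^2\big],$$ $$\mathcal{V}_k\ge(1-L\eta)\|x^k-x^\star\|^2+\big(1-(1+\sqrt2)L\eta\big)\|x^k-y^{k-1}\|^2+2(1-L\eta)\|x^k-x^{k-1}\|^2.$$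
   Context: $J_{\eta T}:=(\mathbb{I}+\eta T)^{-1}$ is the resolvent of $\eta T$. $\mathrm{zer}\,\Phi:=\{x:0\in Fx+Tx\}$. $F$ is $L$-Lipschitz if $\|Fx-Fy\|\le L\|x-y\|$. The range $k\ge1$ is where all quantities in $\mathcal{V}_k$ are defined by the scheme. *)

theory Defs
  imports "HOL-Analysis.Analysis"
begin

definition graph_op :: "('a \<Rightarrow> 'a set) \<Rightarrow> ('a \<times> 'a) set" where
  "graph_op T = {(x, u). u \<in> T x}"

definition monotone_op :: "('a::real_inner \<Rightarrow> 'a set) \<Rightarrow> bool" where
  "monotone_op T \<longleftrightarrow> (\<forall>x y u v. u \<in> T x \<longrightarrow> v \<in> T y \<longrightarrow> inner (u - v) (x - y) \<ge> 0)"

definition maximal_monotone_op :: "('a::real_inner \<Rightarrow> 'a set) \<Rightarrow> bool" where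
  "maximal_monotone_op T \<longleftrightarrow> monotone_op T \<and>
     (\<forall>S. monotone_op S \<and> graph_op T \<subseteq> graph_op S \<longrightarrow> graph_op S = graph_op T)"

definition dom_op :: "('a \<Rightarrow> 'a set) \<Rightarrow> 'a set" where
  "dom_op T = {x. T x \<noteq> {}}"

text \<open>Resolvent \<open>J_{\<eta>T} = (I + \<eta>T)^{-1}\<close> (single-valued for maximally monotone T, \<eta> > 0).\<close>
definition resolvent :: "real \<Rightarrow> ('a::real_vector \<Rightarrow> 'a set) \<Rightarrow> 'a \<Rightarrow> 'a" where
  "resolvent \<eta> T z = (THE x. \<exists>u \<in> T x. z = x + \<eta> *\<^sub>R u)"

definition zer_sum :: "('a::real_vector \<Rightarrow> 'a) \<Rightarrow> ('a \<Rightarrow> 'a set) \<Rightarrow> 'a set" where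
  "zer_sum F T = {x. \<exists>u \<in> T x. F x + u = 0}"

end

theory Submission imports Defs begin


lemma finite_ext:
  fixes G :: "('a::euclidean_space \<times> 'a) set" and z :: 'a
  assumes finG: "finite G" and neG: "G \<noteq> {}"
    and mono: "\<And>y w y' w'. (y,w) \<in> G \<Longrightarrow> (y',w') \<in> G \<Longrightarrow> inner (w - w') (y - y') \<ge> 0"
  shows "\<exists>x. \<forall>(y,w)\<in>G. inner (z - x - w) (x - y) \<ge> 0"
proof -
  define C where "C = convex hull (fst ` G)"
  define \<phi> where "\<phi> g x = inner (z - x - snd g) (fst g - x)" for g x
  define p where "p g x = max 0 (\<phi> g x)" for g x
  define S where "S x = (\<Sum>g\<in>G. p g x)" for x
  define f where "f x = (1 / (1 + S x)) *\<^sub>R (x + (\<Sum>g\<in>G. p g x *\<^sub>R fst g))" for x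
  have pnn: "p g x \<ge> 0" for g x by (simp add: p_def)
  have Snn: "S x \<ge> 0" for x unfolding S_def by (simp add: sum_nonneg pnn)
  have compC: "compact C" unfolding C_def using finG by (simp add: finite_imp_compact_convex_hull)
  have convC: "convex C" unfolding C_def by simp
  have neC: "C \<noteq> {}" unfolding C_def using neG by simp
  have yC: "fst g \<in> C" if "g \<in> G" for g unfolding C_def using that by (simp add: hull_inc)
  have contf: "continuous_on C f"
  proof -
    have h: "1 + (\<Sum>g\<in>G. max 0 (inner (z - x - snd g) (fst g - x))) \<noteq> 0" for x
      using Snn[of x] unfolding S_def p_def \<phi>_def by linarith
    show ?thesis unfolding f_def S_def p_def \<phi>_def
      by (intro continuous_intros) (use h in auto)
  qed
  have fC: "f x \<in> C" if xC: "x \<in> C" for x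
  proof (cases "S x = 0")
    case True
    then have "\<forall>g\<in>G. p g x = 0" unfolding S_def using finG by (simp add: sum_nonneg_eq_0_iff pnn)
    then show ?thesis using True xC by (simp add: f_def)
  next
    case False
    then have Sp: "S x > 0" using Snn[of x] by simp
    define v where "v = (\<Sum>g\<in>G. (p g x / S x) *\<^sub>R fst g)"
    have vC: "v \<in> C" unfolding v_def
    proof (rule convex_sum[OF finG convC])
      show "(\<Sum>i\<in>G. p i x / S x) = 1" using Sp by (simp add: S_def flip: sum_divide_distrib)
    qed (use pnn Sp yC in \<open>auto intro: divide_nonneg_pos\<close>)
    have "(\<Sum>g\<in>G. p g x *\<^sub>R fst g) = S x *\<^sub>R v"
      unfolding v_def scaleR_sum_right using Sp by (simp add: scaleR_scaleR)
    then have "f x = (1 / (1 + S x)) *\<^sub>R x + (S x / (1 + S x)) *\<^sub>R v"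
      by (simp add: f_def scaleR_add_right)
    moreover have "(1 / (1 + S x)) + (S x / (1 + S x)) = 1" using Sp by (simp add: field_simps)
    ultimately show ?thesis using convC xC vC Sp unfolding convex_def
      by (metis add_pos_pos divide_nonneg_pos less_eq_real_def zero_less_one pnn Snn)
  qed
  obtain x where xC: "x \<in> C" and fx: "f x = x"
    using brouwer[OF compC convC neC contf] fC by blast
  have key: "S x *\<^sub>R x = (\<Sum>g\<in>G. p g x *\<^sub>R fst g)"
  proof -
    have "(1 + S x) *\<^sub>R f x = x + (\<Sum>g\<in>G. p g x *\<^sub>R fst g)"
      unfolding f_def using Snn[of x] by (simp add: add_nonneg_eq_0_iff)
    then show ?thesis using fx by (simp add: algebra_simps)
  qed
  have S0: "S x = 0"
  proof (rule ccontr)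
    assume "S x \<noteq> 0"
    then have Sp: "S x > 0" using Snn[of x] by simp
    define D where "D g h = p g x * p h x * inner (z - x - snd g) (fst g - fst h)" for g h
    have "S x * (\<Sum>g\<in>G. p g x * \<phi> g x) = (\<Sum>g\<in>G. p g x * inner (z - x - snd g) (S x *\<^sub>R fst g - S x *\<^sub>R x))"
      by (simp add: \<phi>_def sum_distrib_left inner_diff_right algebra_simps)
    also have "\<dots> = (\<Sum>g\<in>G. \<Sum>h\<in>G. D g h)"
      unfolding key
    proof (rule sum.cong[OF refl])
      fix g assume "g \<in> G"
      have e: "S x *\<^sub>R fst g - (\<Sum>h\<in>G. p h x *\<^sub>R fst h) = (\<Sum>h\<in>G. p h x *\<^sub>R (fst g - fst h))"
        by (simp add: S_def scaleR_sum_left scaleR_diff_right sum_subtractf)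
      show "p g x * inner (z - x - snd g) (S x *\<^sub>R fst g - (\<Sum>h\<in>G. p h x *\<^sub>R fst h)) = (\<Sum>h\<in>G. D g h)"
        unfolding e inner_sum_right sum_distrib_left D_def by (simp add: mult.assoc)
    qed
    finally have eq1: "S x * (\<Sum>g\<in>G. p g x * \<phi> g x) = (\<Sum>g\<in>G. \<Sum>h\<in>G. D g h)" .
    have "2 * (\<Sum>g\<in>G. \<Sum>h\<in>G. D g h) = (\<Sum>g\<in>G. \<Sum>h\<in>G. D g h) + (\<Sum>h\<in>G. \<Sum>g\<in>G. D g h)"
      by (simp add: sum.swap[of D G G])
    also have "\<dots> = (\<Sum>g\<in>G. \<Sum>h\<in>G. D g h + D h g)"
      by (simp add: sum.distrib)
    also have "\<dots> \<le> 0"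
    proof (intro sum_nonpos)
      fix g h assume g: "g \<in> G" and h: "h \<in> G"
      have "D g h + D h g = - (p g x * p h x) * inner (snd g - snd h) (fst g - fst h)"
        by (simp add: D_def algebra_simps inner_diff_left inner_diff_right inner_commute)
      moreover have "inner (snd g - snd h) (fst g - fst h) \<ge> 0"
        using mono[of "fst g" "snd g" "fst h" "snd h"] g h by simp
      ultimately show "D g h + D h g \<le> 0" using pnn
        by (simp add: mult_nonneg_nonneg)
    qed
    finally have le0: "S x * (\<Sum>g\<in>G. p g x * \<phi> g x) \<le> 0" using eq1 by simp
    have pp: "p g x * \<phi> g x = (p g x)^2" for g
      by (simp add: p_def power2_eq_square max_def)
    have "\<exists>g\<in>G. p g x > 0"
    proof (rule ccontr)
      assume "\<not> (\<exists>g\<in>G. p g x > 0)"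
      then have "\<forall>g\<in>G. p g x = 0" using pnn by (metis order.not_eq_order_implies_strict)
      then show False using Sp unfolding S_def by simp
    qed
    then obtain g where g: "g \<in> G" "p g x > 0" by blast
    have "(\<Sum>g\<in>G. p g x * \<phi> g x) > 0"
      unfolding pp using g finG
      by (intro sum_pos2[OF finG g(1)]) auto
    then have "S x * (\<Sum>g\<in>G. p g x * \<phi> g x) > 0" using Sp by (rule mult_pos_pos[rotated])
    then show False using le0 by linarith
  qed
  then have "\<forall>g\<in>G. p g x = 0" unfolding S_def using finG by (simp add: sum_nonneg_eq_0_iff pnn)
  then have "\<forall>g\<in>G. \<phi> g x \<le> 0" unfolding p_def by (metis max.cobounded2)
  then have "\<forall>(y,w)\<in>G. inner (z - x - w) (x - y) \<ge> 0"
  proof (clarsimp)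
    fix y w assume a: "\<forall>g\<in>G. \<phi> g x \<le> 0" and yw: "(y,w) \<in> G"
    have "inner (z - x - w) (y - x) \<le> 0" using a yw by (force simp: \<phi>_def)
    moreover have "inner (z - x - w) (x - y) = - inner (z - x - w) (y - x)"
      by (simp add: inner_diff_right)
    ultimately show "0 \<le> inner (z - x - w) (x - y)" by linarith
  qed
  then show ?thesis by blast
qed

lemma ball_bound:
  fixes a y x :: "'a::euclidean_space"
  assumes "inner (a - x) (x - y) \<ge> 0"
  shows "x \<in> cball ((1/2) *\<^sub>R (a + y)) (norm (a - y) / 2)"
proof -
  have e: "(norm (x - (1/2) *\<^sub>R (a + y)))^2 = (norm (a - y))^2 / 4 - inner (a - x) (x - y)"
    by (simp add: power2_norm_eq_inner inner_diff_left inner_diff_right inner_add_left inner_add_right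
        inner_commute algebra_simps) (simp add: field_simps)
  then have "(norm (x - (1/2) *\<^sub>R (a + y)))^2 \<le> (norm (a - y) / 2)^2"
    using assms by (simp add: power_divide)
  then have "norm (x - (1/2) *\<^sub>R (a + y)) \<le> norm (a - y) / 2"
    by (rule power2_le_imp_le) simp
  then show ?thesis by (simp add: dist_norm norm_minus_commute)
qed

lemma minty:
  fixes T :: "'a::euclidean_space \<Rightarrow> 'a set"
  assumes mm: "maximal_monotone_op T" and eta: "\<eta> > 0" and ne: "dom_op T \<noteq> {}"
  shows "\<exists>x. \<exists>u\<in>T x. z = x + \<eta> *\<^sub>R u"
proof -
  have monoT: "monotone_op T" using mm by (simp add: maximal_monotone_op_def)
  define Gr where "Gr = graph_op T"
  define K where "K g = {x. inner (z - x - \<eta> *\<^sub>R snd g) (x - fst g) \<ge> 0}" for g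
  obtain y0 v0 where g0: "v0 \<in> T y0" using ne unfolding dom_op_def by auto
  have g0G: "(y0, v0) \<in> Gr" using g0 by (simp add: Gr_def graph_op_def)
  have clK: "closed (K g)" for g
    unfolding K_def by (intro closed_Collect_le continuous_intros)
  have compK: "compact (K (y0,v0))"
  unfolding compact_eq_bounded_closed
  proof (intro conjI clK)
    have "K (y0,v0) \<subseteq> cball ((1/2) *\<^sub>R ((z - \<eta> *\<^sub>R v0) + y0)) (norm ((z - \<eta> *\<^sub>R v0) - y0) / 2)"
    proof
      fix x assume "x \<in> K (y0,v0)"
      then have "inner ((z - \<eta> *\<^sub>R v0) - x) (x - y0) \<ge> 0" by (simp add: K_def algebra_simps)
      then show "x \<in> cball ((1/2) *\<^sub>R ((z - \<eta> *\<^sub>R v0) + y0)) (norm ((z - \<eta> *\<^sub>R v0) - y0) / 2)"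
        by (rule ball_bound)
    qed
    then show "bounded (K (y0,v0))" using bounded_cball bounded_subset by blast
  qed
  have "K (y0,v0) \<inter> \<Inter>(K ` Gr) \<noteq> {}"
  proof (rule compact_imp_fip[OF compK])
    show "closed S" if "S \<in> K ` Gr" for S using that clK by auto
  next
    fix F' assume finF': "finite F'" and sub: "F' \<subseteq> K ` Gr"
    obtain G' where G': "G' \<subseteq> Gr" "finite G'" "F' = K ` G'"
      using finite_subset_image[OF finF' sub] by blast
    define H where "H = (\<lambda>g. (fst g, \<eta> *\<^sub>R snd g)) ` insert (y0,v0) G'"
    have "\<exists>x. \<forall>(y,w)\<in>H. inner (z - x - w) (x - y) \<ge> 0"
    proof (rule finite_ext)
      show "finite H" using G' by (simp add: H_def)
      show "H \<noteq> {}" by (simp add: H_def)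
    next
      fix y w y' w' assume h1: "(y,w) \<in> H" and h2: "(y',w') \<in> H"
      have gs: "insert (y0,v0) G' \<subseteq> Gr" using G' g0G by blast
      obtain g where g: "g \<in> insert (y0,v0) G'" "(y,w) = (fst g, \<eta> *\<^sub>R snd g)"
        using h1 unfolding H_def by blast
      obtain g' where g': "g' \<in> insert (y0,v0) G'" "(y',w') = (fst g', \<eta> *\<^sub>R snd g')"
        using h2 unfolding H_def by blast
      have "(y, snd g) \<in> Gr" "(y', snd g') \<in> Gr" "w = \<eta> *\<^sub>R snd g" "w' = \<eta> *\<^sub>R snd g'"
        using g g' gs by auto
      then obtain v v' where "(y,v) \<in> Gr" "(y',v') \<in> Gr" "w = \<eta> *\<^sub>R v" "w' = \<eta> *\<^sub>R v'"
        by blast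
      then have "v \<in> T y" "v' \<in> T y'" "w - w' = \<eta> *\<^sub>R (v - v')"
        by (auto simp: Gr_def graph_op_def scaleR_diff_right)
      then show "inner (w - w') (y - y') \<ge> 0"
        using monoT eta by (simp add: monotone_op_def)
    qed
    then obtain x where x: "\<forall>(y,w)\<in>H. inner (z - x - w) (x - y) \<ge> 0" by blast
    have "x \<in> K g" if "g \<in> insert (y0,v0) G'" for g
    proof -
      have "(fst g, \<eta> *\<^sub>R snd g) \<in> H" unfolding H_def using that by (rule imageI)
      then show ?thesis using x by (auto simp: K_def)
    qed
    then show "K (y0,v0) \<inter> \<Inter>F' \<noteq> {}" using G' by blast
  qed
  then obtain x where xK: "\<And>g. g \<in> Gr \<Longrightarrow> x \<in> K g" by blast
  define u where "u = (1/\<eta>) *\<^sub>R (z - x)"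
  have zu: "z = x + \<eta> *\<^sub>R u" using eta by (simp add: u_def)
  have ineq: "inner (u - v) (x - y) \<ge> 0" if "v \<in> T y" for y v
  proof -
    have "x \<in> K (y,v)" using xK that by (simp add: Gr_def graph_op_def)
    then have "inner (z - x - \<eta> *\<^sub>R v) (x - y) \<ge> 0" by (simp add: K_def)
    moreover have "z - x - \<eta> *\<^sub>R v = \<eta> *\<^sub>R (u - v)" using zu by (simp add: algebra_simps)
    ultimately show ?thesis using eta by (simp add: zero_le_mult_iff)
  qed
  define S where "S w = T w \<union> (if w = x then {u} else {})" for w
  have monoS: "monotone_op S"
    unfolding monotone_op_def
  proof (intro allI impI)
    fix a b c d assume c: "c \<in> S a" and d: "d \<in> S b"
    show "inner (c - d) (a - b) \<ge> 0"
    proof (cases "c \<in> T a")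
      case True
      show ?thesis
      proof (cases "d \<in> T b")
        case True
        then show ?thesis using \<open>c \<in> T a\<close> monoT by (simp add: monotone_op_def)
      next
        case False
        then have "b = x" "d = u" using d by (auto simp: S_def split: if_splits)
        have "inner (c - d) (a - b) = inner (d - c) (b - a)"
          by (simp add: inner_diff_left inner_diff_right inner_commute algebra_simps)
        then show ?thesis using ineq[OF \<open>c \<in> T a\<close>] \<open>b = x\<close> \<open>d = u\<close> by simp
      qed
    next
      case False
      then have ax: "a = x" "c = u" using c by (auto simp: S_def split: if_splits)
      show ?thesis
      proof (cases "d \<in> T b")
        case True
        then show ?thesis using ineq[OF True] ax by simp
      next
        case False
        then have "b = x" "d = u" using d by (auto simp: S_def split: if_splits)
        then show ?thesis using ax by simp
      qed
    qed
  qed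
  have "graph_op T \<subseteq> graph_op S" by (auto simp: graph_op_def S_def)
  then have "graph_op S = graph_op T" using mm monoS by (simp add: maximal_monotone_op_def)
  moreover have "(x,u) \<in> graph_op S" by (simp add: graph_op_def S_def)
  ultimately have "(x,u) \<in> graph_op T" by simp
  then have "u \<in> T x" by (simp add: graph_op_def)
  then show ?thesis using zu by blast
qed

lemma resolvent_prop:
  fixes T :: "'a::euclidean_space \<Rightarrow> 'a set"
  assumes mm: "maximal_monotone_op T" and eta: "\<eta> > 0" and ne: "dom_op T \<noteq> {}"
  shows "\<exists>u\<in>T (resolvent \<eta> T z). z = resolvent \<eta> T z + \<eta> *\<^sub>R u"
proof -
  have monoT: "monotone_op T" using mm by (simp add: maximal_monotone_op_def)
  have uniq: "x1 = x2" if h12: "\<exists>u\<in>T x1. z = x1 + \<eta> *\<^sub>R u" "\<exists>u\<in>T x2. z = x2 + \<eta> *\<^sub>R u" for x1 x2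
  proof -
    obtain u1 u2 where u: "u1 \<in> T x1" "u2 \<in> T x2" "z = x1 + \<eta> *\<^sub>R u1" "z = x2 + \<eta> *\<^sub>R u2"
      using h12 by blast
    have m: "inner (u1 - u2) (x1 - x2) \<ge> 0" using monoT u by (simp add: monotone_op_def)
    have "x1 - x2 = - \<eta> *\<^sub>R (u1 - u2)" using u by (simp add: algebra_simps)
    then have "inner (x1 - x2) (x1 - x2) = - \<eta> * inner (u1 - u2) (x1 - x2)"
      by (metis inner_scaleR_left)
    then have "inner (x1 - x2) (x1 - x2) \<le> 0" using m eta
      by (simp add: mult_nonneg_nonneg)
    then have "x1 - x2 = 0" by (metis inner_gt_zero_iff not_le)
    then show ?thesis by simp
  qed
  obtain x where "\<exists>u\<in>T x. z = x + \<eta> *\<^sub>R u" using minty[OF mm eta ne] by blast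
  then have "\<exists>!x. \<exists>u\<in>T x. z = x + \<eta> *\<^sub>R u" using uniq by blast
  then show ?thesis unfolding resolvent_def by (rule theI')
qed



lemma arith1:
  fixes pp qq rr zz qp rq Gp Gq Gr Hq Hr Kq Kr \<eta> c e :: real
  assumes M1: "- qp - qq - \<eta>*Gp - \<eta>*Gq \<ge> 0"
    and M3: "\<eta> * Gp + \<eta> * Gr \<ge> 0"
    and M2: "rq - qq - \<eta>*Hq \<ge> 0"
    and G1: "\<eta>*Gq = \<eta>*Kq + \<eta>*Hq" and G2: "\<eta>*Gr = \<eta>*Kr + \<eta>*Hr"
    and E4: "2*\<eta>*Hr - 2*\<eta>*Hq \<le> c*(rr - 2*rq + qq) + e*zz + (e + c)*rr"
  shows "pp + 2*rr + (1-c)*zz + 2*\<eta>*Kr \<ge> (pp + 2*qp + qq + 2*qq + (1-c)*(qq - 2*rq + rr) + 2*\<eta>*Gq) + (1 - (e + c))*(rr + zz)"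
  using assms by (simp add: algebra_simps)

lemma arith2:
  fixes A B C :: real
  assumes "A \<ge> 0" "B \<ge> 0" "C \<ge> 0"
  shows "2*(A+B)*C \<le> sqrt 2 * C^2 + B^2 + (1 + sqrt 2)*A^2"
proof -
  have s2: "sqrt 2 * sqrt 2 = 2" by simp
  have "2*A*C \<le> (1 + sqrt 2)*A^2 + (sqrt 2 - 1)*C^2"
  proof -
    have "0 \<le> ((1 + sqrt 2)*A - C)^2" by simp
    also have "\<dots> = (1 + sqrt 2) * ((1 + sqrt 2)*A^2 + (sqrt 2 - 1)*C^2 - 2*A*C)"
      by (simp add: power2_eq_square algebra_simps s2)
    finally show ?thesis
      by (simp add: zero_le_mult_iff) (smt (verit) real_sqrt_ge_zero zero_le_numeral)
  qed
  moreover have "2*B*C \<le> B^2 + C^2" using sum_squares_bound[of B C] by (simp add: power2_eq_square algebra_simps)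
  ultimately show ?thesis by (simp add: algebra_simps)
qed



theorem lemma7:
  fixes F :: "'a::euclidean_space \<Rightarrow> 'a" and T :: "'a \<Rightarrow> 'a set"
    and L \<eta> :: real and xs :: 'a and x y :: "nat \<Rightarrow> 'a" and V :: "nat \<Rightarrow> real"
  assumes maxmono: "maximal_monotone_op T"
    and lip: "L-lipschitz_on UNIV F"
    and xs_zer: "xs \<in> zer_sum F T"
    and star_mono: "\<forall>z. inner (F z - F xs) (z - xs) \<ge> 0"
    and eta_pos: "\<eta> > 0"
    and x0_dom: "x 0 \<in> dom_op T"
    and y_def: "\<And>k. y k = 2 *\<^sub>R x k - x (k - 1)"
    and x_step: "\<And>k. x (Suc k) = resolvent \<eta> T (x k - \<eta> *\<^sub>R F (y k))"
    and V_def: "\<And>k. V k = (norm (x k - xs))\<^sup>2 + 2 * (norm (x k - x (k - 1)))\<^sup>2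
                  + (1 - sqrt 2 * L * \<eta>) * (norm (x k - y (k - 1)))\<^sup>2
                  + 2 * \<eta> * inner (F (y (k - 1)) - F xs) (x k - x (k - 1))"
    and k_ge: "k \<ge> 1"
  shows "V k \<ge> V (Suc k) + (1 - (1 + sqrt 2) * L * \<eta>) *
                  ((norm (y k - x k))\<^sup>2 + (norm (x k - y (k - 1)))\<^sup>2)
       \<and> V k \<ge> (1 - L * \<eta>) * (norm (x k - xs))\<^sup>2
                  + (1 - (1 + sqrt 2) * L * \<eta>) * (norm (x k - y (k - 1)))\<^sup>2
                  + 2 * (1 - L * \<eta>) * (norm (x k - x (k - 1)))\<^sup>2"
proof -
  obtain m where km: "k = Suc m" using k_ge by (cases k) auto
  have ne: "dom_op T \<noteq> {}" using x0_dom by blast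
  have monoT: "monotone_op T" using maxmono by (simp add: maximal_monotone_op_def)
  have L0: "L \<ge> 0" using lip by (rule lipschitz_on_nonneg)
  have lipF: "norm (F u - F v) \<le> L * norm (u - v)" for u v
    using lipschitz_onD[OF lip, of u v] by (simp add: dist_norm)
  define a where "a = x m"
  define b where "b = x (Suc m)"
  define c where "c = x (Suc (Suc m))"
  define yp where "yp = y m"
  define yy where "yy = y (Suc m)"
  have yy_eq: "yy = 2 *\<^sub>R b - a" by (simp add: yy_def y_def a_def b_def)
  obtain ub where ub: "ub \<in> T b" "a - \<eta> *\<^sub>R F yp = b + \<eta> *\<^sub>R ub"
    using resolvent_prop[OF maxmono eta_pos ne, of "a - \<eta> *\<^sub>R F yp"]
    by (auto simp: b_def a_def yp_def x_step[of m])
  obtain uc where uc: "uc \<in> T c" "b - \<eta> *\<^sub>R F yy = c + \<eta> *\<^sub>R uc"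
    using resolvent_prop[OF maxmono eta_pos ne, of "b - \<eta> *\<^sub>R F yy"]
    by (auto simp: b_def c_def yy_def x_step[of "Suc m"])
  obtain us where us: "us \<in> T xs" "F xs + us = 0" using xs_zer by (auto simp: zer_sum_def)
  define p where "p = b - xs"
  define q where "q = c - b"
  define r where "r = b - a"
  define s where "s = b - yp"
  define G where "G = F yy - F xs"
  define H where "H = F yy - F yp"
  define K where "K = F yp - F xs"
  define cc where "cc = sqrt 2 * L * \<eta>"
  define e where "e = L * \<eta>"
  have e0: "e \<ge> 0" using L0 eta_pos by (simp add: e_def)
  have euc: "\<eta> *\<^sub>R uc = (b - \<eta> *\<^sub>R F yy) - c" unfolding uc(2) by simp
  have eub: "\<eta> *\<^sub>R ub = (a - \<eta> *\<^sub>R F yp) - b" unfolding ub(2) by simp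
  have eus: "us = - F xs" using us(2) by (simp add: eq_neg_iff_add_eq_0 add.commute)
  have d1: "\<eta> *\<^sub>R (uc - us) = - q - \<eta> *\<^sub>R G"
    by (simp add: scaleR_diff_right euc eus q_def G_def algebra_simps)
  have d2: "\<eta> *\<^sub>R (uc - ub) = (r - q) - \<eta> *\<^sub>R H"
    by (simp add: scaleR_diff_right euc eub q_def r_def H_def yy_eq algebra_simps)
  have m1: "inner (uc - us) (c - xs) \<ge> 0" using monoT uc(1) us(1) by (simp add: monotone_op_def)
  have m2: "inner (uc - ub) (c - b) \<ge> 0" using monoT uc(1) ub(1) by (simp add: monotone_op_def)
  have cxs: "c - xs = p + q" by (simp add: p_def q_def)
  have M1: "inner (- q - \<eta> *\<^sub>R G) (p + q) \<ge> 0"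
    using m1 eta_pos unfolding d1[symmetric] cxs by (simp add: zero_le_mult_iff)
  have M2: "inner ((r - q) - \<eta> *\<^sub>R H) q \<ge> 0"
    using m2 eta_pos unfolding d2[symmetric] q_def[symmetric] by (simp add: zero_le_mult_iff)
  have M3: "inner G (p + r) \<ge> 0"
  proof -
    have "yy - xs = p + r" by (simp add: yy_eq p_def r_def algebra_simps scaleR_2)
    then show ?thesis using star_mono[rule_format, of yy] by (simp add: G_def)
  qed
  have nH: "norm H \<le> L * (norm r + norm s)"
  proof -
    have "yy - yp = r + s" by (simp add: yy_eq r_def s_def algebra_simps scaleR_2)
    then have "norm H \<le> L * norm (r + s)" using lipF[of yy yp] by (simp add: H_def)
    also have "\<dots> \<le> L * (norm r + norm s)" using L0 by (simp add: mult_left_mono norm_triangle_ineq)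
    finally show ?thesis .
  qed
  have E4': "2 * \<eta> * inner H (r - q) \<le> cc * (norm (r - q))^2 + e * (norm s)^2 + (e + cc) * (norm r)^2"
  proof -
    have "inner H (r - q) \<le> norm H * norm (r - q)" by (rule norm_cauchy_schwarz)
    also have "\<dots> \<le> L * (norm r + norm s) * norm (r - q)" using nH by (simp add: mult_right_mono)
    finally have h: "inner H (r - q) \<le> L * (norm r + norm s) * norm (r - q)" .
    have "2 * \<eta> * inner H (r - q) \<le> 2 * \<eta> * (L * (norm r + norm s) * norm (r - q))"
      using eta_pos h by (intro mult_left_mono) auto
    also have "\<dots> = (\<eta> * L) * (2 * (norm r + norm s) * norm (r - q))" by (simp add: algebra_simps)
    also have "\<dots> \<le> (\<eta> * L) * (sqrt 2 * (norm (r - q))^2 + (norm s)^2 + (1 + sqrt 2) * (norm r)^2)"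
      using arith2[of "norm r" "norm s" "norm (r - q)"] eta_pos L0 by (intro mult_left_mono) auto
    finally show ?thesis by (simp add: cc_def e_def algebra_simps)
  qed
  have E4: "2*\<eta>*inner H r - 2*\<eta>*inner H q \<le> cc*(inner r r - 2*inner r q + inner q q) + e*inner s s + (e + cc)*inner r r"
    using E4' by (simp add: power2_norm_eq_inner inner_diff_right inner_diff_left inner_commute algebra_simps)
  have A1: "\<eta> * inner G q = \<eta> * inner K q + \<eta> * inner H q" "\<eta> * inner G r = \<eta> * inner K r + \<eta> * inner H r"
    by (simp_all add: G_def H_def K_def inner_diff_left algebra_simps)
  have M1': "- inner q p - inner q q - \<eta> * inner G p - \<eta> * inner G q \<ge> 0"
    using M1 by (simp add: inner_add_right inner_diff_left inner_minus_left algebra_simps)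
  have M2': "inner r q - inner q q - \<eta> * inner H q \<ge> 0"
    using M2 by (simp add: inner_diff_left algebra_simps)
  have M3': "\<eta> * inner G p + \<eta> * inner G r \<ge> 0"
    using M3 eta_pos by (simp add: inner_add_right distrib_left[symmetric])
  note core = arith1[OF M1' M3' M2' A1 E4]
  have Vk: "V k = inner p p + 2*inner r r + (1-cc)*inner s s + 2*\<eta>*inner K r"
  proof -
    have "V k = (norm p)^2 + 2*(norm r)^2 + (1-cc)*(norm s)^2 + 2*\<eta>*inner K r"
      unfolding km V_def by (simp add: a_def b_def yp_def p_def r_def s_def K_def cc_def)
    then show ?thesis by (simp add: power2_norm_eq_inner)
  qed
  have Vk1: "V (Suc k) = inner p p + 2*inner q p + inner q q + 2*inner q q + (1-cc)*(inner q q - 2*inner r q + inner r r) + 2*\<eta>*inner G q"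
  proof -
    have "V (Suc k) = (norm (c - xs))^2 + 2*(norm (c - b))^2 + (1-cc)*(norm (c - yy))^2 + 2*\<eta>*inner G (c - b)"
      unfolding km V_def by (simp add: c_def b_def yy_def G_def cc_def)
    moreover have "c - xs = p + q" "c - b = q" "c - yy = q - r"
      by (simp_all add: p_def q_def r_def yy_eq algebra_simps scaleR_2)
    ultimately show ?thesis
      by (simp add: power2_norm_eq_inner inner_add_left inner_add_right inner_diff_left inner_diff_right inner_commute algebra_simps)
  qed
  have n1: "(norm (y k - x k))\<^sup>2 = inner r r"
  proof -
    have "y k - x k = r" by (simp add: km yy_def[symmetric] b_def[symmetric] yy_eq r_def algebra_simps scaleR_2)
    then show ?thesis by (simp add: power2_norm_eq_inner)
  qed
  have n2: "(norm (x k - y (k - 1)))\<^sup>2 = inner s s"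
    by (simp add: km b_def yp_def s_def power2_norm_eq_inner)
  have n3: "(norm (x k - xs))\<^sup>2 = inner p p"
    by (simp add: km b_def p_def power2_norm_eq_inner)
  have n4: "(norm (x k - x (k - 1)))\<^sup>2 = inner r r"
    by (simp add: km b_def a_def r_def power2_norm_eq_inner)
  have coef: "(1 + sqrt 2) * L * \<eta> = e + cc" by (simp add: e_def cc_def algebra_simps)
  have claim1: "V k \<ge> V (Suc k) + (1 - (1 + sqrt 2) * L * \<eta>) *
                  ((norm (y k - x k))\<^sup>2 + (norm (x k - y (k - 1)))\<^sup>2)"
    unfolding Vk Vk1 n1 n2 coef using core by (simp add: inner_commute)
  have nK: "norm K \<le> L * (norm p + norm s)"
  proof -
    have "yp - xs = p - s" by (simp add: p_def s_def algebra_simps)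
    then have "norm K \<le> L * norm (p - s)" using lipF[of yp xs] by (simp add: K_def)
    also have "\<dots> \<le> L * (norm p + norm s)" using L0 by (simp add: mult_left_mono norm_triangle_ineq4)
    finally show ?thesis .
  qed
  have Kb: "- (2 * \<eta> * inner K r) \<le> e * (inner p p + inner s s + 2 * inner r r)"
  proof -
    have "- inner K r \<le> norm K * norm r" using norm_cauchy_schwarz[of "-K" r] by simp
    also have "\<dots> \<le> L * (norm p + norm s) * norm r" using nK by (simp add: mult_right_mono)
    finally have h: "- inner K r \<le> L * (norm p + norm s) * norm r" .
    have "2 * \<eta> * (- inner K r) \<le> 2 * \<eta> * (L * (norm p + norm s) * norm r)"
      using eta_pos h by (intro mult_left_mono) auto
    then have "- (2 * \<eta> * inner K r) \<le> 2 * \<eta> * (L * (norm p + norm s) * norm r)" by simp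
    also have "\<dots> = e * (2 * norm p * norm r + 2 * norm s * norm r)" by (simp add: e_def algebra_simps)
    also have "\<dots> \<le> e * ((norm p)^2 + (norm s)^2 + 2 * (norm r)^2)"
    proof (rule mult_left_mono[OF _ e0])
      show "2 * norm p * norm r + 2 * norm s * norm r \<le> (norm p)^2 + (norm s)^2 + 2 * (norm r)^2"
        using sum_squares_bound[of "norm p" "norm r"] sum_squares_bound[of "norm s" "norm r"]
        by (simp add: power2_eq_square algebra_simps)
    qed
    finally show ?thesis by (simp add: power2_norm_eq_inner)
  qed
  have claim2: "V k \<ge> (1 - L * \<eta>) * (norm (x k - xs))\<^sup>2
                  + (1 - (1 + sqrt 2) * L * \<eta>) * (norm (x k - y (k - 1)))\<^sup>2
                  + 2 * (1 - L * \<eta>) * (norm (x k - x (k - 1)))\<^sup>2"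
    unfolding Vk n2 n3 n4 coef e_def[symmetric] using Kb by (simp add: algebra_simps)
  show ?thesis using claim1 claim2 by blast
qed
end
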